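(* Let $d_n$ be the number of Dyck paths of semilength $n\ge1$ with the following property: every descent that does not end on the $x$-axis (that is, at height $0$) has odd length, while descents ending on the $x$-axis may have any length. Let $g_0(z)=\sum_{n\ge1}d_nz^{2n}$. Then $$g_0=\frac{z^2v_1}{v_1(1-z^2)-z},$$ and, with $Z=z^2$, $g_0=Z+2Z^2+5Z^3+13Z^4+35Z^5+97Z^6+274Z^7+785Z^8+\cdots$.
   Context: A Dyck path is a finite sequence of up-steps $(1,1)$ and down-steps $(1,-1)$ starting at height $0$, never going below height $0$, and ending at height $0$; its semilength is half its number of steps. Only nonempty paths are considered. A descent is a maximal run of consecutive down-steps; its length is the number of down-steps in it. Let $v_1=v_1(z)$ denote the unique root $u$ of the cubic $$z u^3+(z^2-1)u^2-z^3u+z^2=0$$ which is a Laurent series in $z$ with $z\,v_1(z)\to1$ as $z\to0$. Its expansion begins $v_1=\frac1z-z-z^5-2z^7-\cdots$. *)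

theory Defs
  imports Main "HOL-Computational_Algebra.Formal_Laurent_Series"
begin

text \<open>A lattice path is a list of steps: True = up-step (1,1), False = down-step (1,-1).\<close>

definition height :: "bool list \<Rightarrow> int" where
  "height xs = int (length (filter id xs)) - int (length (filter Not xs))"

definition dyck :: "bool list \<Rightarrow> bool" where
  "dyck xs \<longleftrightarrow> xs \<noteq> [] \<and> (\<forall>k \<le> length xs. height (take k xs) \<ge> 0) \<and> height xs = 0"

text \<open>Steps with indices i..j (0-based, inclusive) form a descent: a maximal run of down-steps.\<close>
definition is_descent :: "bool list \<Rightarrow> nat \<Rightarrow> nat \<Rightarrow> bool" where
  "is_descent xs i j \<longleftrightarrow> i \<le> j \<and> j < length xs \<and> (\<forall>k. i \<le> k \<and> k \<le> j \<longrightarrow> \<not> xs ! k)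
     \<and> (i = 0 \<or> xs ! (i - 1)) \<and> (j + 1 = length xs \<or> xs ! (j + 1))"

definition odd_descents_off_axis :: "bool list \<Rightarrow> bool" where
  "odd_descents_off_axis xs \<longleftrightarrow>
     (\<forall>i j. is_descent xs i j \<and> height (take (j + 1) xs) \<noteq> 0 \<longrightarrow> odd (j - i + 1))"

definition dcount :: "nat \<Rightarrow> nat" where
  "dcount n = card {xs. length xs = 2 * n \<and> dyck xs \<and> odd_descents_off_axis xs}"

definition g0 :: "real fls" where
  "g0 = fps_to_fls (Abs_fps (\<lambda>m. if even m \<and> m \<ge> 2 then real (dcount (m div 2)) else 0))"

text \<open>v is a root of z u^3 + (z^2-1) u^2 - z^3 u + z^2 = 0 which is a Laurent series
  with z v(z) -> 1 as z -> 0, i.e. v = 1/z + (power series without constant-term restriction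
  beyond this).\<close>
definition is_v1 :: "real fls \<Rightarrow> bool" where
  "is_v1 v \<longleftrightarrow> fls_X * v ^ 3 + (fls_X ^ 2 - 1) * v ^ 2 - fls_X ^ 3 * v + fls_X ^ 2 = 0
     \<and> (\<forall>n < -1. fls_nth v n = 0) \<and> fls_nth v (-1) = 1"

end

theory Submission
  imports Defs
begin

lemma height_simps[simp]:
  "height [] = 0" "height (True # xs) = height xs + 1" "height (False # xs) = height xs - 1"
  "height (xs @ ys) = height xs + height ys"
  by (auto simp: height_def)

lemma height_Cons: "height (x # xs) = (if x then 1 else -1) + height xs"
  by (cases x) auto

definition posp :: "int \<Rightarrow> bool list \<Rightarrow> bool" where
  "posp h xs \<longleftrightarrow> (\<forall>k \<le> length xs. h + height (take k xs) \<ge> 0)"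

lemma all_le_Suc: "(\<forall>k\<le>Suc n. P k) \<longleftrightarrow> P 0 \<and> (\<forall>k\<le>n. P (Suc k))"
  by (metis Suc_le_mono le0 not0_implies_Suc)

lemma posp_Nil[simp]: "posp h [] \<longleftrightarrow> h \<ge> 0"
  by (simp add: posp_def)

lemma posp_Cons: "posp h (x # xs) \<longleftrightarrow> h \<ge> 0 \<and> posp (h + (if x then 1 else -1)) xs"
  unfolding posp_def by (simp only: length_Cons all_le_Suc) (auto simp: height_Cons algebra_simps)

lemma posp_Cons_simps[simp]:
  "posp h (True # xs) \<longleftrightarrow> h \<ge> 0 \<and> posp (h + 1) xs"
  "posp h (False # xs) \<longleftrightarrow> h \<ge> 0 \<and> posp (h - 1) xs"
  by (auto simp: posp_Cons)

lemma posp_ge: "posp h xs \<Longrightarrow> h \<ge> 0"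
  by (cases xs) (auto simp: posp_Cons)

lemma posp_append: "posp h (xs @ ys) \<longleftrightarrow> posp h xs \<and> posp (h + height xs) ys"
proof (induction xs arbitrary: h)
  case Nil
  then show ?case using posp_ge by auto
next
  case (Cons x xs)
  then show ?case by (cases x) (auto simp: algebra_simps)
qed

definition dy :: "bool list \<Rightarrow> bool" where
  "dy xs \<longleftrightarrow> posp 0 xs \<and> height xs = 0"

lemma dyck_dy: "dyck xs \<longleftrightarrow> xs \<noteq> [] \<and> dy xs"
  by (simp add: dyck_def dy_def posp_def)

lemma dy_Nil[simp]: "dy []" by (simp add: dy_def)

lemma posp_mono: "posp h xs \<Longrightarrow> h \<le> h' \<Longrightarrow> posp h' xs"
  unfolding posp_def by force

lemma dy_join: "dy a \<Longrightarrow> dy b \<Longrightarrow> dy (True # a @ False # b)"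
  by (auto simp: dy_def posp_append intro: posp_mono)

lemma dy_even: "dy xs \<Longrightarrow> length xs = 2 * length (filter id xs)"
proof -
  assume "dy xs"
  then have "int (length (filter id xs)) = int (length (filter Not xs))"
    by (simp add: dy_def height_def)
  moreover have "length (filter id xs) + length (filter Not xs) = length xs"
    using sum_length_filter_compl[of id xs] by (simp add: comp_def)
  ultimately show ?thesis by simp
qed

lemma dy_head: "dy (x # xs) \<Longrightarrow> x"
  by (cases x) (auto simp: dy_def dest: posp_ge)

lemma height_take_Suc:
  "k < length xs \<Longrightarrow> height (take (Suc k) xs) = height (take k xs) + (if xs ! k then 1 else -1)"
  by (cases "xs ! k") (auto simp: take_Suc_conv_app_nth)

lemma first_neg:
  assumes "height xs < 0"
  shows "\<exists>a b. xs = a @ False # b \<and> posp 0 a \<and> height a = 0"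
proof -
  define k where "k = (LEAST k. height (take k xs) < 0)"
  have ex: "height (take (length xs) xs) < 0" using assms by simp
  have k1: "height (take k xs) < 0" unfolding k_def by (rule LeastI, rule ex)
  have k2: "\<And>j. j < k \<Longrightarrow> height (take j xs) \<ge> 0" unfolding k_def
    using not_less_Least by (metis not_le)
  have kle: "k \<le> length xs" unfolding k_def by (rule Least_le, rule ex)
  have "k \<noteq> 0" using k1 by (rule_tac ccontr) simp
  then obtain j where kj: "k = Suc j" by (cases k) auto
  have jl: "j < length xs" using kle kj by simp
  have hj: "height (take j xs) \<ge> 0" using k2 kj by simp
  have hs: "height (take (Suc j) xs) = height (take j xs) + (if xs ! j then 1 else -1)"
    using height_take_Suc[OF jl] .
  have xj: "\<not> xs ! j" and h0: "height (take j xs) = 0" using hs hj k1 kj by (auto split: if_splits)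
  have "xs = take j xs @ xs ! j # drop (Suc j) xs"
    using jl by (simp add: id_take_nth_drop)
  moreover have "posp 0 (take j xs)" unfolding posp_def
    using k2 kj by (auto simp: min_def)
  ultimately show ?thesis using xj h0 by (metis (full_types))
qed

lemma dy_decomp:
  assumes "dy xs" "xs \<noteq> []"
  shows "\<exists>a b. xs = True # a @ False # b \<and> dy a \<and> dy b"
proof -
  obtain x r where xr: "xs = x # r" using assms by (cases xs) auto
  have x: x using assms xr dy_head by blast
  have hr: "height r < 0" using assms xr x by (simp add: dy_def)
  obtain a b where ab: "r = a @ False # b" "posp 0 a" "height a = 0" using first_neg[OF hr] by blast
  show ?thesis using assms xr x ab by (auto simp: dy_def posp_append)
qed

lemma dy_inj:
  assumes "dy a" "dy a'" "True # a @ False # b = True # a' @ False # b'"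
  shows "a = a' \<and> b = b'"
proof -
  have e: "a @ False # b = a' @ False # b'" using assms by simp
  have c: False if "dy a" "dy a'" "length a < length a'" "a @ False # b = a' @ False # b'" for a a' b b' :: "bool list"
  proof -
    have "take (Suc (length a)) (a' @ False # b') = take (Suc (length a)) (a @ False # b)" using that by simp
    moreover have "take (Suc (length a)) (a' @ False # b') = take (Suc (length a)) a'" using that(3) by simp
    ultimately have t: "take (Suc (length a)) a' = a @ [False]" by simp
    have "posp 0 a'" using that by (auto simp: dy_def)
    then have "0 + height (take (Suc (length a)) a') \<ge> 0" using that unfolding posp_def by simp
    then show False using t that by (simp add: dy_def)
  qed
  have "length a = length a'"
    using c[OF assms(1) assms(2) _ e] c[OF assms(2) assms(1) _ e[symmetric]] by (metis linorder_neqE_nat)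
  then show ?thesis using e by simp
qed

definition endc :: "int \<Rightarrow> nat \<Rightarrow> bool" where
  "endc h r \<longleftrightarrow> r = 0 \<or> h = 0 \<or> odd r"

fun chkp :: "int \<Rightarrow> nat \<Rightarrow> bool list \<Rightarrow> bool" where
  "chkp h r [] = True"
| "chkp h r (x # xs) = (if x then endc h r \<and> chkp (h + 1) 0 xs else chkp (h - 1) (Suc r) xs)"

fun tr :: "nat \<Rightarrow> bool list \<Rightarrow> nat" where
  "tr r [] = r"
| "tr r (x # xs) = (if x then tr 0 xs else tr (Suc r) xs)"

fun oddc :: "nat \<Rightarrow> bool list \<Rightarrow> bool" where
  "oddc r [] = True"
| "oddc r (x # xs) = (if x then (r = 0 \<or> odd r) \<and> oddc 0 xs else oddc (Suc r) xs)"

lemma chkp_append: "chkp h r (xs @ ys) \<longleftrightarrow> chkp h r xs \<and> chkp (h + height xs) (tr r xs) ys"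
  by (induction xs arbitrary: h r) (auto simp: height_Cons algebra_simps)

lemma tr_append: "tr r (xs @ ys) = tr (tr r xs) ys"
  by (induction xs arbitrary: r) auto

lemma oddc_append: "oddc r (xs @ ys) \<longleftrightarrow> oddc r xs \<and> oddc (tr r xs) ys"
  by (induction xs arbitrary: r) auto

lemma chkp_oddc: "posp (h - 1) xs \<Longrightarrow> chkp h r xs = oddc r xs"
proof (induction xs arbitrary: h r)
  case Nil then show ?case by simp
next
  case (Cons x xs)
  show ?case
  proof (cases x)
    case True
    then have "h - 1 \<ge> 0" "posp h xs" using Cons.prems by auto
    then show ?thesis using Cons.IH[of "h+1"] True by (auto simp: endc_def)
  next
    case False
    then have "posp (h - 2) xs" using Cons.prems by auto
    then show ?thesis using Cons.IH[of "h-1"] False by auto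
  qed
qed

lemma tr_snoc: "tr r (xs @ [b]) = (if b then 0 else Suc (tr r xs))"
  by (simp add: tr_append)

lemma tr0_last: "xs \<noteq> [] \<Longrightarrow> tr r xs = 0 \<longleftrightarrow> last xs"
  by (induction xs rule: rev_induct) (auto simp: tr_snoc)

definition inner :: "bool list \<Rightarrow> bool" where
  "inner xs \<longleftrightarrow> (\<forall>i j. is_descent xs i j \<and> Suc j < length xs \<and> height (take (j + 1) xs) \<noteq> 0 \<longrightarrow> odd (j - i + 1))"

lemma desc_snoc_True: "j < length xs \<Longrightarrow> is_descent (xs @ [True]) i j \<longleftrightarrow> is_descent xs i j"
  unfolding is_descent_def by (auto simp: nth_append)

lemma desc_len: "is_descent xs i j \<Longrightarrow> j < length xs"
  by (simp add: is_descent_def)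

lemma desc_snoc_False: "j < length xs \<Longrightarrow> is_descent (xs @ [False]) i j \<longleftrightarrow> is_descent xs i j \<and> Suc j < length xs"
  unfolding is_descent_def by (auto simp: nth_append)

lemma nth_snoc': "k \<le> length xs \<Longrightarrow> (xs @ [b]) ! k = (if k < length xs then xs ! k else b)"
  by (auto simp: nth_append)

lemma L_T: "\<not> is_descent (xs @ [True]) i (length xs)"
proof
  assume "is_descent (xs @ [True]) i (length xs)"
  then have "i \<le> length xs" "\<forall>k. i \<le> k \<and> k \<le> length xs \<longrightarrow> \<not> (xs @ [True]) ! k"
    by (simp_all add: is_descent_def)
  then show False by (metis le_refl nth_append_length)
qed

lemma L_1: "is_descent [False] i 0 \<longleftrightarrow> i = 0"
  by (auto simp: is_descent_def)

lemma L_2: assumes "xs \<noteq> []" "xs ! (length xs - 1)"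
  shows "is_descent (xs @ [False]) i (length xs) \<longleftrightarrow> i = length xs"
proof
  assume "is_descent (xs @ [False]) i (length xs)"
  then have a: "i \<le> length xs" "\<forall>k. i \<le> k \<and> k \<le> length xs \<longrightarrow> \<not> (xs @ [False]) ! k"
    by (simp_all add: is_descent_def)
  show "i = length xs"
  proof (rule ccontr)
    assume "i \<noteq> length xs"
    then have "i \<le> length xs - 1" "length xs - 1 \<le> length xs" using a(1) by auto
    then have "\<not> (xs @ [False]) ! (length xs - 1)" using a(2) by blast
    moreover have "(xs @ [False]) ! (length xs - 1) = xs ! (length xs - 1)"
      using assms(1) by (simp add: nth_append)
    ultimately show False using assms(2) by simp
  qed
next
  assume i: "i = length xs"
  have "(xs @ [False]) ! (length xs - 1) = xs ! (length xs - 1)"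
    using assms(1) by (simp add: nth_append)
  then show "is_descent (xs @ [False]) i (length xs)"
    unfolding is_descent_def i using assms by (auto simp: le_antisym)
qed

lemma L_3: assumes "xs \<noteq> []" "\<not> xs ! (length xs - 1)"
  shows "is_descent (xs @ [False]) i (length xs) \<longleftrightarrow> is_descent xs i (length xs - 1)"
proof
  assume "is_descent (xs @ [False]) i (length xs)"
  then have a: "i \<le> length xs" "\<forall>k. i \<le> k \<and> k \<le> length xs \<longrightarrow> \<not> (xs @ [False]) ! k"
     "i = 0 \<or> (xs @ [False]) ! (i - 1)"
    by (simp_all add: is_descent_def)
  have il: "i < length xs"
  proof (rule ccontr)
    assume "\<not> i < length xs"
    then have "i = length xs" using a(1) by simp
    moreover have "(xs @ [False]) ! (length xs - 1) = xs ! (length xs - 1)"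
      using assms(1) by (simp add: nth_append)
    ultimately show False using a(3) assms by auto
  qed
  have b: "\<forall>k. i \<le> k \<and> k \<le> length xs - 1 \<longrightarrow> \<not> xs ! k"
  proof (intro allI impI)
    fix k assume k: "i \<le> k \<and> k \<le> length xs - 1"
    then have "k < length xs" using il by auto
    then show "\<not> xs ! k" using a(2) k by (metis less_imp_le_nat nth_append)
  qed
  have c: "i = 0 \<or> xs ! (i - 1)" using a(3) il by (auto simp: nth_append)
  show "is_descent xs i (length xs - 1)" unfolding is_descent_def
    using il b c by auto
next
  assume "is_descent xs i (length xs - 1)"
  then have a: "i \<le> length xs - 1" "\<forall>k. i \<le> k \<and> k \<le> length xs - 1 \<longrightarrow> \<not> xs ! k"
     "i = 0 \<or> xs ! (i - 1)"
    by (simp_all add: is_descent_def)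
  have il: "i < length xs" using a(1) assms(1) by (cases xs) auto
  have b: "\<forall>k. i \<le> k \<and> k \<le> length xs \<longrightarrow> \<not> (xs @ [False]) ! k"
  proof (intro allI impI)
    fix k assume k: "i \<le> k \<and> k \<le> length xs"
    show "\<not> (xs @ [False]) ! k"
    proof (cases "k < length xs")
      case True then show ?thesis using a(2) k by (simp add: nth_append)
    next
      case False then have "k = length xs" using k by simp
      then show ?thesis by simp
    qed
  qed
  have c: "i = 0 \<or> (xs @ [False]) ! (i - 1)" using a(3) il by (auto simp: nth_append)
  show "is_descent (xs @ [False]) i (length xs)" unfolding is_descent_def
    using il b c by auto
qed
lemma final_desc:
  "xs \<noteq> [] \<Longrightarrow> is_descent xs i (length xs - 1) \<longleftrightarrow> (tr 0 xs > 0 \<and> i = length xs - tr 0 xs)"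
proof (induction xs arbitrary: i rule: rev_induct)
  case Nil then show ?case by simp
next
  case (snoc b xs)
  show ?case
  proof (cases b)
    case True
    then show ?thesis using L_T[of xs i] by (simp add: tr_snoc)
  next
    case False
    show ?thesis
    proof (cases "xs = []")
      case True
      then show ?thesis using False L_1 by simp
    next
      case ne: False
      show ?thesis
      proof (cases "tr 0 xs = 0")
        case True
        then have lx: "last xs" using tr0_last[OF ne, of 0] by simp
        then have lx': "xs ! (length xs - 1)" using ne by (simp add: last_conv_nth)
        have "is_descent (xs @ [b]) i (length xs) \<longleftrightarrow> i = length xs"
          using False L_2[OF ne lx'] by simp
        then show ?thesis using False True by (simp add: tr_snoc)
      next
        case tp: False
        have lx: "\<not> last xs" using tr0_last[OF ne, of 0] tp by simp
        then have lx': "\<not> xs ! (length xs - 1)" using ne by (simp add: last_conv_nth)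
        have "is_descent (xs @ [b]) i (length xs) \<longleftrightarrow> is_descent xs i (length xs - 1)"
          using False L_3[OF ne lx'] by simp
        then show ?thesis using False tp snoc.IH[OF ne] by (auto simp: tr_snoc)
      qed
    qed
  qed
qed

lemma tr_le: "tr r xs \<le> r + length xs"
proof (induction xs arbitrary: r)
  case (Cons a xs)
  then show ?case using Cons.IH[of 0] Cons.IH[of "Suc r"] by auto
qed simp

lemma inner_snoc_False: "inner (xs @ [False]) \<longleftrightarrow> inner xs"
proof -
  have e: "(is_descent (xs @ [False]) i j \<and> Suc j < length (xs @ [False]) \<and> height (take (j + 1) (xs @ [False])) \<noteq> 0)
     \<longleftrightarrow> (is_descent xs i j \<and> Suc j < length xs \<and> height (take (j + 1) xs) \<noteq> 0)" for i j
  proof (cases "j < length xs")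
    case True
    then show ?thesis using desc_snoc_False[OF True] by auto
  next
    case False
    then show ?thesis by auto
  qed
  show ?thesis unfolding inner_def using e by presburger
qed

lemma inner_True_odd: "inner (xs @ [True]) \<longleftrightarrow> odd_descents_off_axis xs"
proof -
  have e: "(is_descent (xs @ [True]) i j \<and> Suc j < length (xs @ [True]) \<and> height (take (j + 1) (xs @ [True])) \<noteq> 0)
     \<longleftrightarrow> (is_descent xs i j \<and> height (take (j + 1) xs) \<noteq> 0)" for i j
  proof (cases "j < length xs")
    case True
    then show ?thesis using desc_snoc_True[OF True] by auto
  next
    case False
    then show ?thesis using desc_len[of xs i j] by auto
  qed
  show ?thesis unfolding inner_def odd_descents_off_axis_def using e by presburger
qed

lemma odd_split: "odd_descents_off_axis xs \<longleftrightarrow> inner xs \<and> endc (height xs) (tr 0 xs)"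
proof (cases "xs = []")
  case True
  then show ?thesis by (simp add: inner_def odd_descents_off_axis_def is_descent_def endc_def)
next
  case ne: False
  define P where "P i j \<longleftrightarrow> (is_descent xs i j \<and> height (take (j + 1) xs) \<noteq> 0 \<longrightarrow> odd (j - i + 1))" for i j
  have o: "odd_descents_off_axis xs \<longleftrightarrow> (\<forall>i j. P i j)" unfolding odd_descents_off_axis_def P_def by blast
  have in1: "inner xs \<longleftrightarrow> (\<forall>i j. Suc j < length xs \<longrightarrow> P i j)" unfolding inner_def P_def by blast
  have all: "(\<forall>i j. P i j) \<longleftrightarrow> (\<forall>i j. Suc j < length xs \<longrightarrow> P i j) \<and> (\<forall>i. P i (length xs - 1))"
  proof
    assume "\<forall>i j. P i j" then show "(\<forall>i j. Suc j < length xs \<longrightarrow> P i j) \<and> (\<forall>i. P i (length xs - 1))" by blast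
  next
    assume a: "(\<forall>i j. Suc j < length xs \<longrightarrow> P i j) \<and> (\<forall>i. P i (length xs - 1))"
    show "\<forall>i j. P i j"
    proof (intro allI)
      fix i j
      show "P i j"
      proof (cases "j < length xs")
        case True
        then have "Suc j < length xs \<or> j = length xs - 1" by auto
        then show ?thesis using a by auto
      next
        case False
        then show ?thesis unfolding P_def using desc_len[of xs i j] by auto
      qed
    qed
  qed
  have fin: "(\<forall>i. P i (length xs - 1)) \<longleftrightarrow> endc (height xs) (tr 0 xs)"
  proof -
    have tl: "tr 0 xs \<le> length xs" using tr_le[of 0 xs] by simp
    have lp: "length xs - 1 + 1 = length xs" using ne by (cases xs) auto
    have "(\<forall>i. P i (length xs - 1)) \<longleftrightarrow> (\<forall>i. (tr 0 xs > 0 \<and> i = length xs - tr 0 xs) \<and> height xs \<noteq> 0 \<longrightarrow> odd (length xs - 1 - i + 1))"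
      unfolding P_def using final_desc[OF ne] lp by simp
    also have "\<dots> \<longleftrightarrow> (tr 0 xs > 0 \<and> height xs \<noteq> 0 \<longrightarrow> odd (tr 0 xs))"
      using tl ne by (cases xs) auto
    finally show ?thesis unfolding endc_def by auto
  qed
  show ?thesis using o in1 all fin by blast
qed

lemma chkp_snoc: "chkp h r (xs @ [b]) \<longleftrightarrow> chkp h r xs \<and> (b \<longrightarrow> endc (h + height xs) (tr r xs))"
  by (cases b) (simp_all add: chkp_append)

lemma inner_chkp: "inner xs \<longleftrightarrow> chkp 0 0 xs"
proof (induction xs rule: rev_induct)
  case Nil then show ?case by (simp add: inner_def)
next
  case (snoc b xs)
  then show ?case
    by (cases b) (simp_all add: chkp_snoc inner_snoc_False inner_True_odd odd_split)
qed

lemma odd_desc_chkp: "odd_descents_off_axis xs \<longleftrightarrow> chkp 0 0 xs \<and> endc (height xs) (tr 0 xs)"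
  using odd_split inner_chkp by blast

lemma endc_0[simp]: "endc 0 r" "endc h 0" by (simp_all add: endc_def)

lemma chkp0_start: "dy b \<Longrightarrow> chkp 0 r b = chkp 0 0 b"
  by (cases b) (auto dest: dy_head simp: endc_def)

lemma good_split: "dy a \<Longrightarrow> dy b \<Longrightarrow> chkp 0 0 (True # a @ False # b) \<longleftrightarrow> oddc 0 a \<and> chkp 0 0 b"
proof -
  assume a: "dy a" and b: "dy b"
  have "posp (1 - 1) a" using a by (simp add: dy_def)
  then have c: "chkp 1 0 a = oddc 0 a" by (rule chkp_oddc)
  have "chkp 0 0 (True # a @ False # b) \<longleftrightarrow> chkp 1 0 (a @ False # b)" by (simp add: endc_def)
  also have "\<dots> \<longleftrightarrow> chkp 1 0 a \<and> chkp 0 (Suc (tr 0 a)) b" using a by (simp add: chkp_append dy_def)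
  finally show ?thesis using c chkp0_start[OF b, of "Suc (tr 0 a)"] by simp
qed

lemma oddc_split: "dy b \<Longrightarrow> oddc 0 (True # a @ False # b) \<longleftrightarrow> oddc 0 a \<and> (b = [] \<or> (even (tr 0 a) \<and> oddc 0 b))"
  by (cases b) (auto simp: oddc_append dest: dy_head)

lemma tr_split: "dy b \<Longrightarrow> tr 0 (True # a @ False # b) = (if b = [] then Suc (tr 0 a) else tr 0 b)"
  by (cases b) (auto simp: tr_append dest: dy_head)

definition Pe :: "bool list \<Rightarrow> bool" where "Pe x \<longleftrightarrow> oddc 0 x \<and> even (tr 0 x)"
definition Po :: "bool list \<Rightarrow> bool" where "Po x \<longleftrightarrow> oddc 0 x \<and> odd (tr 0 x)"

lemma Pe_split: assumes "dy b" shows "Pe (True # a @ False # b) \<longleftrightarrow> (Po a \<and> b = []) \<or> (Pe a \<and> (b \<noteq> [] \<and> Pe b))"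
  unfolding Pe_def Po_def oddc_split[OF \<open>dy b\<close>] tr_split[OF \<open>dy b\<close>] by auto

lemma Po_split: assumes "dy b" shows "Po (True # a @ False # b) \<longleftrightarrow> (Pe a \<and> b = []) \<or> (Pe a \<and> (b \<noteq> [] \<and> Po b))"
  unfolding Pe_def Po_def oddc_split[OF \<open>dy b\<close>] tr_split[OF \<open>dy b\<close>] by auto

lemma good_split2: assumes "dy a" "dy b" shows "chkp 0 0 (True # a @ False # b) \<longleftrightarrow> (Pe a \<and> chkp 0 0 b) \<or> (Po a \<and> chkp 0 0 b)"
  unfolding Pe_def Po_def good_split[OF assms] by auto

definition S :: "(bool list \<Rightarrow> bool) \<Rightarrow> nat \<Rightarrow> bool list set" where
  "S P n = {xs. length xs = 2 * n \<and> dy xs \<and> P xs}"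

lemma finite_S: "finite (S P n)"
proof -
  have "S P n \<subseteq> {xs. set xs \<subseteq> UNIV \<and> length xs = 2 * n}" unfolding S_def by auto
  moreover have "finite {xs :: bool list. set xs \<subseteq> UNIV \<and> length xs = 2 * n}"
    by (rule finite_lists_length_eq) simp
  ultimately show ?thesis by (rule finite_subset)
qed

lemma card_join:
  assumes P: "\<And>a b. dy a \<Longrightarrow> dy b \<Longrightarrow> P (True # a @ False # b) \<longleftrightarrow> (Q1 a \<and> R1 b) \<or> (Q2 a \<and> R2 b)"
    and ex: "\<And>a b. Q1 a \<Longrightarrow> R1 b \<Longrightarrow> Q2 a \<Longrightarrow> R2 b \<Longrightarrow> False"
  shows "card (S P (Suc n)) = (\<Sum>k\<le>n. card (S Q1 k) * card (S R1 (n - k)) + card (S Q2 k) * card (S R2 (n - k)))"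
proof -
  define f :: "bool list \<times> bool list \<Rightarrow> bool list" where "f = (\<lambda>(a, b). True # a @ False # b)"
  define U1 where "U1 k = S Q1 k \<times> S R1 (n - k)" for k
  define U2 where "U2 k = S Q2 k \<times> S R2 (n - k)" for k
  define U where "U = (\<Union>k\<le>n. U1 k \<union> U2 k)"
  have sub: "U \<subseteq> {(a, b). dy a \<and> dy b}" unfolding U_def U1_def U2_def S_def by auto
  have inj: "inj_on f U"
  proof (rule inj_onI)
    fix x y assume "x \<in> U" "y \<in> U" "f x = f y"
    then show "x = y"
    proof (cases x, cases y)
      fix a b a' b' assume xy: "x = (a, b)" "y = (a', b')" and xU: "x \<in> U" "y \<in> U" "f x = f y"
      have "dy a" "dy a'" using xU sub xy by auto
      moreover have "True # a @ False # b = True # a' @ False # b'" using xU(3) xy unfolding f_def by simp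
      ultimately show "x = y" using dy_inj xy by blast
    qed
  qed
  have eq: "S P (Suc n) = f ` U"
  proof
    show "S P (Suc n) \<subseteq> f ` U"
    proof
      fix xs assume xs: "xs \<in> S P (Suc n)"
      then have d: "dy xs" "xs \<noteq> []" "length xs = 2 * Suc n" "P xs" unfolding S_def by auto
      then obtain a b where ab: "xs = True # a @ False # b" "dy a" "dy b" using dy_decomp by blast
      define ka where "ka = length (filter id a)"
      define kb where "kb = length (filter id b)"
      have la: "length a = 2 * ka" using dy_even[OF ab(2)] ka_def by simp
      have lb: "length b = 2 * kb" using dy_even[OF ab(3)] kb_def by simp
      have "ka + kb = n" using d(3) ab(1) la lb by simp
      then have kn: "ka \<le> n" "kb = n - ka" by auto
      have "(Q1 a \<and> R1 b) \<or> (Q2 a \<and> R2 b)" using P[OF ab(2,3)] d(4) ab(1) by simp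
      then have "(a, b) \<in> U1 ka \<union> U2 ka" unfolding U1_def U2_def S_def using ab la lb kn by auto
      then have "(a, b) \<in> U" unfolding U_def using kn by blast
      then show "xs \<in> f ` U" unfolding f_def using ab(1) by force
    qed
  next
    show "f ` U \<subseteq> S P (Suc n)"
    proof
      fix xs assume "xs \<in> f ` U"
      then obtain a b k where k: "k \<le> n" "(a, b) \<in> U1 k \<union> U2 k" "xs = True # a @ False # b"
        unfolding U_def f_def by auto
      then have ab: "dy a" "dy b" "length a = 2 * k" "length b = 2 * (n - k)" "(Q1 a \<and> R1 b) \<or> (Q2 a \<and> R2 b)"
        unfolding U1_def U2_def S_def by auto
      have "length xs = 2 * Suc n" using k(1,3) ab(3,4) by simp
      moreover have "dy xs" using k(3) dy_join ab by simp
      moreover have "P xs" using k(3) P[OF ab(1,2)] ab(5) by simp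
      ultimately show "xs \<in> S P (Suc n)" unfolding S_def by simp
    qed
  qed
  have fin: "finite (U1 k)" "finite (U2 k)" for k unfolding U1_def U2_def using finite_S by auto
  have lenU: "length (fst p) = 2 * k" if "p \<in> U1 k \<union> U2 k" for p k
    using that unfolding U1_def U2_def S_def by (cases p) auto
  have disj: "(U1 i \<union> U2 i) \<inter> (U1 j \<union> U2 j) = {}" if "i \<noteq> j" for i j
  proof -
    have False if "p \<in> U1 i \<union> U2 i" "p \<in> U1 j \<union> U2 j" for p
      using lenU[OF that(1)] lenU[OF that(2)] \<open>i \<noteq> j\<close> by simp
    then show ?thesis by blast
  qed
  have disj2: "U1 k \<inter> U2 k = {}" for k
  proof -
    have False if "(a, b) \<in> U1 k" "(a, b) \<in> U2 k" for a b
    proof -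
      have "Q1 a" "R1 b" "Q2 a" "R2 b" using that by (simp_all add: U1_def U2_def S_def)
      then show False by (rule ex)
    qed
    then show ?thesis by auto
  qed
  have "card (S P (Suc n)) = card U" using eq inj card_image by metis
  also have "\<dots> = (\<Sum>k\<le>n. card (U1 k \<union> U2 k))"
    unfolding U_def by (rule card_UN_disjoint) (use fin disj in auto)
  also have "\<dots> = (\<Sum>k\<le>n. card (U1 k) + card (U2 k))"
    by (rule sum.cong) (simp_all add: card_Un_disjoint[OF fin(1) fin(2) disj2])
  finally show ?thesis unfolding U1_def U2_def by (simp add: card_cartesian_product)
qed

lemma S_0: "S P 0 = (if P [] then {[]} else {})"
  unfolding S_def by auto

lemma card_S_Nil: "card (S (\<lambda>b. b = []) m) = (if m = 0 then 1 else 0)"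
proof -
  have "S (\<lambda>b. b = []) m = (if m = 0 then {[]} else {})" unfolding S_def by auto
  then show ?thesis by simp
qed

lemma S_ne: "S (\<lambda>b. b \<noteq> [] \<and> Q b) m = (if m = 0 then {} else S Q m)"
  unfolding S_def by auto

lemma card_S_ne: "card (S (\<lambda>b. b \<noteq> [] \<and> Q b) m) = (if m = 0 then 0 else card (S Q m))"
  by (simp add: S_ne)

definition ce where "ce n = card (S Pe n)"
definition co where "co n = card (S Po n)"
definition cg where "cg n = card (S (chkp 0 0) n)"

lemma ce0: "ce 0 = 1" by (simp add: ce_def S_0 Pe_def)
lemma co0: "co 0 = 0" by (simp add: co_def S_0 Po_def)
lemma cg0: "cg 0 = 1" by (simp add: cg_def S_0)

lemma ce_Suc: "ce (Suc n) = (\<Sum>k\<le>n. co k * (if n - k = 0 then 1 else 0) + ce k * (if n - k = 0 then 0 else ce (n - k)))"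
proof -
  have "card (S Pe (Suc n)) = (\<Sum>k\<le>n. card (S Po k) * card (S (\<lambda>b. b = []) (n - k)) + card (S Pe k) * card (S (\<lambda>b. b \<noteq> [] \<and> Pe b) (n - k)))"
    by (rule card_join) (simp only: Pe_split, auto)
  then show ?thesis unfolding ce_def co_def by (simp add: card_S_Nil card_S_ne)
qed

lemma co_Suc: "co (Suc n) = (\<Sum>k\<le>n. ce k * (if n - k = 0 then 1 else 0) + ce k * co (n - k))"
proof -
  have "co (Suc n) = (\<Sum>k\<le>n. card (S Pe k) * card (S (\<lambda>b. b = []) (n - k)) + card (S Pe k) * card (S (\<lambda>b. b \<noteq> [] \<and> Po b) (n - k)))"
    unfolding co_def by (rule card_join) (simp only: Po_split, auto)
  moreover have "card (S (\<lambda>b. b \<noteq> [] \<and> Po b) m) = co m" for m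
    using co0 by (simp add: S_ne co_def)
  ultimately show ?thesis by (simp add: card_S_Nil ce_def)
qed

lemma cg_Suc: "cg (Suc n) = (\<Sum>k\<le>n. ce k * cg (n - k) + co k * cg (n - k))"
  unfolding cg_def ce_def co_def by (rule card_join) (simp only: good_split2, auto simp: Pe_def Po_def)

lemma dcount_cg: "n \<ge> 1 \<Longrightarrow> dcount n = cg n"
proof -
  assume n: "n \<ge> 1"
  have "{xs. length xs = 2 * n \<and> dyck xs \<and> odd_descents_off_axis xs} = S (chkp 0 0) n"
    unfolding S_def using n by (auto simp: dyck_dy odd_desc_chkp dy_def endc_def)
  then show ?thesis by (simp add: dcount_def cg_def)
qed

lemma ce_num: "ce (numeral m) = (\<Sum>k\<le>pred_numeral m. co k * (if pred_numeral m - k = 0 then 1 else 0) + ce k * (if pred_numeral m - k = 0 then 0 else ce (pred_numeral m - k)))"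
  by (subst numeral_eq_Suc) (rule ce_Suc)
lemma co_num: "co (numeral m) = (\<Sum>k\<le>pred_numeral m. ce k * (if pred_numeral m - k = 0 then 1 else 0) + ce k * co (pred_numeral m - k))"
  by (subst numeral_eq_Suc) (rule co_Suc)
lemma cg_num: "cg (numeral m) = (\<Sum>k\<le>pred_numeral m. ce k * cg (pred_numeral m - k) + co k * cg (pred_numeral m - k))"
  by (subst numeral_eq_Suc) (rule cg_Suc)

lemma cg_vals: "map cg [1..<9] = [1, 2, 5, 13, 35, 97, 274, 785]"
proof -
  have ce_1: "ce (Suc 0) = 0" using ce_Suc[of 0] by (simp add: One_nat_def atMost_nat_numeral  ce0 co0 cg0)
  have co_1: "co (Suc 0) = 1" using co_Suc[of 0] by (simp add: One_nat_def atMost_nat_numeral  ce0 co0 cg0)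
  have cg_1: "cg (Suc 0) = 1" using cg_Suc[of 0] by (simp add: One_nat_def atMost_nat_numeral  ce0 co0 cg0)
  have ce_2: "ce 2 = 1" by (simp add: One_nat_def ce_num atMost_nat_numeral ce_1 co_1 cg_1 ce0 co0 cg0)
  have co_2: "co 2 = 1" by (simp add: One_nat_def co_num atMost_nat_numeral ce_1 co_1 cg_1 ce0 co0 cg0)
  have cg_2: "cg 2 = 2" by (simp add: One_nat_def cg_num atMost_nat_numeral ce_1 co_1 cg_1 ce0 co0 cg0)
  have ce_3: "ce 3 = 2" by (simp add: One_nat_def ce_num atMost_nat_numeral ce_1 co_1 cg_1 ce_2 co_2 cg_2 ce0 co0 cg0)
  have co_3: "co 3 = 2" by (simp add: One_nat_def co_num atMost_nat_numeral ce_1 co_1 cg_1 ce_2 co_2 cg_2 ce0 co0 cg0)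
  have cg_3: "cg 3 = 5" by (simp add: One_nat_def cg_num atMost_nat_numeral ce_1 co_1 cg_1 ce_2 co_2 cg_2 ce0 co0 cg0)
  have ce_4: "ce 4 = 4" by (simp add: One_nat_def ce_num atMost_nat_numeral ce_1 co_1 cg_1 ce_2 co_2 cg_2 ce_3 co_3 cg_3 ce0 co0 cg0)
  have co_4: "co 4 = 5" by (simp add: One_nat_def co_num atMost_nat_numeral ce_1 co_1 cg_1 ce_2 co_2 cg_2 ce_3 co_3 cg_3 ce0 co0 cg0)
  have cg_4: "cg 4 = 13" by (simp add: One_nat_def cg_num atMost_nat_numeral ce_1 co_1 cg_1 ce_2 co_2 cg_2 ce_3 co_3 cg_3 ce0 co0 cg0)
  have ce_5: "ce 5 = 10" by (simp add: One_nat_def ce_num atMost_nat_numeral ce_1 co_1 cg_1 ce_2 co_2 cg_2 ce_3 co_3 cg_3 ce_4 co_4 cg_4 ce0 co0 cg0)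
  have co_5: "co 5 = 12" by (simp add: One_nat_def co_num atMost_nat_numeral ce_1 co_1 cg_1 ce_2 co_2 cg_2 ce_3 co_3 cg_3 ce_4 co_4 cg_4 ce0 co0 cg0)
  have cg_5: "cg 5 = 35" by (simp add: One_nat_def cg_num atMost_nat_numeral ce_1 co_1 cg_1 ce_2 co_2 cg_2 ce_3 co_3 cg_3 ce_4 co_4 cg_4 ce0 co0 cg0)
  have ce_6: "ce 6 = 26" by (simp add: One_nat_def ce_num atMost_nat_numeral ce_1 co_1 cg_1 ce_2 co_2 cg_2 ce_3 co_3 cg_3 ce_4 co_4 cg_4 ce_5 co_5 cg_5 ce0 co0 cg0)
  have co_6: "co 6 = 30" by (simp add: One_nat_def co_num atMost_nat_numeral ce_1 co_1 cg_1 ce_2 co_2 cg_2 ce_3 co_3 cg_3 ce_4 co_4 cg_4 ce_5 co_5 cg_5 ce0 co0 cg0)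
  have cg_6: "cg 6 = 97" by (simp add: One_nat_def cg_num atMost_nat_numeral ce_1 co_1 cg_1 ce_2 co_2 cg_2 ce_3 co_3 cg_3 ce_4 co_4 cg_4 ce_5 co_5 cg_5 ce0 co0 cg0)
  have ce_7: "ce 7 = 68" by (simp add: One_nat_def ce_num atMost_nat_numeral ce_1 co_1 cg_1 ce_2 co_2 cg_2 ce_3 co_3 cg_3 ce_4 co_4 cg_4 ce_5 co_5 cg_5 ce_6 co_6 cg_6 ce0 co0 cg0)
  have co_7: "co 7 = 79" by (simp add: One_nat_def co_num atMost_nat_numeral ce_1 co_1 cg_1 ce_2 co_2 cg_2 ce_3 co_3 cg_3 ce_4 co_4 cg_4 ce_5 co_5 cg_5 ce_6 co_6 cg_6 ce0 co0 cg0)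
  have cg_7: "cg 7 = 274" by (simp add: One_nat_def cg_num atMost_nat_numeral ce_1 co_1 cg_1 ce_2 co_2 cg_2 ce_3 co_3 cg_3 ce_4 co_4 cg_4 ce_5 co_5 cg_5 ce_6 co_6 cg_6 ce0 co0 cg0)
  have ce_8: "ce 8 = 183" by (simp add: One_nat_def ce_num atMost_nat_numeral ce_1 co_1 cg_1 ce_2 co_2 cg_2 ce_3 co_3 cg_3 ce_4 co_4 cg_4 ce_5 co_5 cg_5 ce_6 co_6 cg_6 ce_7 co_7 cg_7 ce0 co0 cg0)
  have co_8: "co 8 = 213" by (simp add: One_nat_def co_num atMost_nat_numeral ce_1 co_1 cg_1 ce_2 co_2 cg_2 ce_3 co_3 cg_3 ce_4 co_4 cg_4 ce_5 co_5 cg_5 ce_6 co_6 cg_6 ce_7 co_7 cg_7 ce0 co0 cg0)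
  have cg_8: "cg 8 = 785" by (simp add: One_nat_def cg_num atMost_nat_numeral ce_1 co_1 cg_1 ce_2 co_2 cg_2 ce_3 co_3 cg_3 ce_4 co_4 cg_4 ce_5 co_5 cg_5 ce_6 co_6 cg_6 ce_7 co_7 cg_7 ce0 co0 cg0)
  have u: "[1..<9] = [1,2,3,4,5,6,7,8::nat]" by code_simp
  have cg1: "cg 1 = 1" using cg_1 by simp
  show ?thesis unfolding u using cg1 cg_2 cg_3 cg_4 cg_5 cg_6 cg_7 cg_8 by simp
qed

definition Ef :: "real fps" where "Ef = Abs_fps (\<lambda>n. real (ce n))"
definition Of :: "real fps" where "Of = Abs_fps (\<lambda>n. real (co n))"
definition Gf :: "real fps" where "Gf = Abs_fps (\<lambda>n. real (cg n))"

lemma delta_sum: fixes m :: nat shows "(\<Sum>k\<le>m. f k * (if m - k = 0 then 1 else 0)) = (f m :: real)"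
proof -
  have "(\<Sum>k\<le>m. f k * (if m - k = 0 then 1 else 0)) = (\<Sum>k\<le>m. if k = m then f k else 0)"
  proof (rule sum.cong[OF refl])
    fix k assume "k \<in> {..m}"
    then show "f k * (if m - k = 0 then 1 else 0) = (if k = m then f k else 0)" by auto
  qed
  also have "\<dots> = f m" by simp
  finally show ?thesis .
qed

lemma Ef_eq: "Ef = 1 + fps_X * (Of + Ef * (Ef - 1))"
proof (rule fps_ext)
  fix n
  show "Ef $ n = (1 + fps_X * (Of + Ef * (Ef - 1))) $ n"
  proof (cases n)
    case 0 then show ?thesis by (simp add: Ef_def ce0)
  next
    case (Suc m)
    have "Ef $ n = (\<Sum>k\<le>m. real (co k) * (if m - k = 0 then 1 else 0) + real (ce k) * (real (ce (m - k)) - (if m - k = 0 then 1 else 0)))"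
      unfolding Suc Ef_def fps_nth_Abs_fps ce_Suc of_nat_sum by (rule sum.cong) (auto simp: ce0)
    also have "\<dots> = (\<Sum>k\<le>m. real (co k) * (if m - k = 0 then 1 else 0)) + (\<Sum>k\<le>m. real (ce k) * (real (ce (m - k)) - (if m - k = 0 then 1 else 0)))"
      by (rule sum.distrib)
    also have "\<dots> = real (co m) + (\<Sum>k\<le>m. real (ce k) * (real (ce (m - k)) - (if m - k = 0 then 1 else 0)))"
      by (simp only: delta_sum)
    also have "\<dots> = (Of + Ef * (Ef - 1)) $ m"
      by (simp add: Of_def Ef_def fps_mult_nth atLeast0AtMost)
    also have "\<dots> = (1 + fps_X * (Of + Ef * (Ef - 1))) $ n"
      by (simp add: Suc)
    finally show ?thesis .
  qed
qed

lemma Of_eq: "Of = fps_X * (Ef + Ef * Of)"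
proof (rule fps_ext)
  fix n
  show "Of $ n = (fps_X * (Ef + Ef * Of)) $ n"
  proof (cases n)
    case 0 then show ?thesis by (simp add: Of_def co0)
  next
    case (Suc m)
    have "Of $ n = (\<Sum>k\<le>m. real (ce k) * (if m - k = 0 then 1 else 0) + real (ce k) * real (co (m - k)))"
      unfolding Suc Of_def fps_nth_Abs_fps co_Suc of_nat_sum by (rule sum.cong) auto
    also have "\<dots> = (\<Sum>k\<le>m. real (ce k) * (if m - k = 0 then 1 else 0)) + (\<Sum>k\<le>m. real (ce k) * real (co (m - k)))"
      by (rule sum.distrib)
    also have "\<dots> = real (ce m) + (\<Sum>k\<le>m. real (ce k) * real (co (m - k)))"
      by (simp only: delta_sum)
    also have "\<dots> = (Ef + Ef * Of) $ m"
      by (simp add: Of_def Ef_def fps_mult_nth atLeast0AtMost)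
    also have "\<dots> = (fps_X * (Ef + Ef * Of)) $ n"
      by (simp add: Suc)
    finally show ?thesis .
  qed
qed

lemma Gf_eq: "Gf = 1 + fps_X * ((Ef + Of) * Gf)"
proof (rule fps_ext)
  fix n
  show "Gf $ n = (1 + fps_X * ((Ef + Of) * Gf)) $ n"
  proof (cases n)
    case 0 then show ?thesis by (simp add: Gf_def cg0)
  next
    case (Suc m)
    have "Gf $ n = (\<Sum>k\<le>m. (real (ce k) + real (co k)) * real (cg (m - k)))"
      unfolding Suc Gf_def fps_nth_Abs_fps cg_Suc of_nat_sum by (rule sum.cong) (auto simp: algebra_simps)
    also have "\<dots> = ((Ef + Of) * Gf) $ m"
      by (simp add: Of_def Ef_def Gf_def fps_mult_nth atLeast0AtMost)
    also have "\<dots> = (1 + fps_X * ((Ef + Of) * Gf)) $ n"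
      by (simp add: Suc)
    finally show ?thesis .
  qed
qed

definition Wf :: "real fps" where "Wf = 1 - fps_X * Ef"

lemma Wf_cubic: "Wf ^ 3 + (fps_X - 1) * Wf ^ 2 - fps_X ^ 2 * Wf + fps_X ^ 2 = 0"
  using Ef_eq Of_eq unfolding Wf_def by algebra

lemma OW: "Of * Wf = 1 - Wf"
  using Of_eq unfolding Wf_def by algebra

lemma GD: "Gf * (Wf ^ 2 - fps_X + fps_X * Wf) = Wf"
  using Gf_eq OW unfolding Wf_def by algebra

lemma Wf0: "Wf $ 0 = 1" by (simp add: Wf_def)

lemma G_ident: "(Gf - 1) * (Wf * (1 - fps_X) - fps_X) = fps_X * Wf"
proof -
  define D where "D = Wf ^ 2 - fps_X + fps_X * Wf"
  have h1: "D * (Gf - 1) = Wf - D" using GD unfolding D_def by (simp add: algebra_simps)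
  have "D * ((Gf - 1) * (Wf * (1 - fps_X) - fps_X) - fps_X * Wf) = (D * (Gf - 1)) * (Wf * (1 - fps_X) - fps_X) - fps_X * Wf * D"
    by (simp add: algebra_simps)
  also have "\<dots> = (Wf - D) * (Wf * (1 - fps_X) - fps_X) - fps_X * Wf * D" using h1 by simp
  also have "\<dots> = - (Wf ^ 3 + (fps_X - 1) * Wf ^ 2 - fps_X ^ 2 * Wf + fps_X ^ 2)"
    unfolding D_def by algebra
  also have "\<dots> = 0" using Wf_cubic by simp
  finally have "D * ((Gf - 1) * (Wf * (1 - fps_X) - fps_X) - fps_X * Wf) = 0" .
  moreover have "D \<noteq> 0"
  proof
    assume "D = 0"
    then have "D $ 0 = 0" by simp
    then show False unfolding D_def by (simp add: Wf0 power2_eq_square)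
  qed
  ultimately show ?thesis by simp
qed

unbundle fps_syntax

definition sq :: "real fps \<Rightarrow> real fps" where "sq f = f oo (fps_X ^ 2)"

lemma X2_0: "(fps_X ^ 2 :: real fps) $ 0 = 0" by simp

lemma sq_nth: "sq f $ m = (if even m then f $ (m div 2) else 0)"
proof -
  have "sq f $ m = (\<Sum>i=0..m. f $ i * ((fps_X ^ 2) ^ i) $ m)"
    unfolding sq_def by (rule fps_compose_nth)
  also have "\<dots> = (\<Sum>i=0..m. if even m \<and> i = m div 2 then f $ i else 0)"
  proof (rule sum.cong[OF refl])
    fix i assume "i \<in> {0..m}"
    have "((fps_X ^ 2) ^ i :: real fps) = fps_X ^ (2 * i)" by (simp add: power_mult)
    then have "((fps_X ^ 2) ^ i :: real fps) $ m = (if m = 2 * i then 1 else 0)"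
      by (simp only: fps_X_power_iff fps_nth_Abs_fps)
    then show "f $ i * ((fps_X ^ 2) ^ i) $ m = (if even m \<and> i = m div 2 then f $ i else 0)"
      by auto
  qed
  also have "\<dots> = (if even m then f $ (m div 2) else 0)"
    by (cases "even m") (simp_all add: sum.delta)
  finally show ?thesis .
qed

lemma sq_mult: "sq (a * b) = sq a * sq b" unfolding sq_def by (rule fps_compose_mult_distrib) simp
lemma sq_add: "sq (a + b) = sq a + sq b" unfolding sq_def by (rule fps_compose_add_distrib)
lemma sq_diff: "sq (a - b) = sq a - sq b" unfolding sq_def by (rule fps_compose_sub_distrib)
lemma sq_uminus: "sq (- a) = - sq a" unfolding sq_def by (rule fps_compose_uminus)
lemma sq_one: "sq 1 = 1" unfolding sq_def by simp
lemma sq_zero: "sq 0 = 0" unfolding sq_def by simp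
lemma sq_X: "sq fps_X = fps_X ^ 2" unfolding sq_def by simp
lemma sq_power: "sq (a ^ n) = sq a ^ n" unfolding sq_def by (rule fps_compose_power[symmetric]) simp

lemmas sq_simps = sq_mult sq_add sq_diff sq_uminus sq_one sq_zero sq_X sq_power

lemma g0_eq: "g0 = fps_to_fls (sq (Gf - 1))"
proof -
  have "Abs_fps (\<lambda>m. if even m \<and> m \<ge> 2 then real (dcount (m div 2)) else 0) = sq (Gf - 1)"
  proof (rule fps_ext)
    fix m
    show "Abs_fps (\<lambda>m. if even m \<and> m \<ge> 2 then real (dcount (m div 2)) else 0) $ m = sq (Gf - 1) $ m"
    proof (cases "even m \<and> m \<ge> 2")
      case True
      then have "m div 2 \<ge> 1" by auto
      then show ?thesis using True by (simp add: sq_nth Gf_def dcount_cg)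
    next
      case False
      then have "odd m \<or> m = 0" by auto
      then show ?thesis using False by (auto simp: sq_nth Gf_def cg0)
    qed
  qed
  then show ?thesis unfolding g0_def by simp
qed

definition wz :: "real fls" where "wz = fps_to_fls (sq Wf)"
definition v0 :: "real fls" where "v0 = fls_X_inv * wz"

lemma wz_cubic: "wz ^ 3 + (fls_X ^ 2 - 1) * wz ^ 2 - fls_X ^ 4 * wz + fls_X ^ 4 = 0"
proof -
  have "sq (Wf ^ 3 + (fps_X - 1) * Wf ^ 2 - fps_X ^ 2 * Wf + fps_X ^ 2) = 0"
    using Wf_cubic sq_zero by simp
  then have "sq Wf ^ 3 + (fps_X ^ 2 - 1) * sq Wf ^ 2 - fps_X ^ 4 * sq Wf + fps_X ^ 4 = 0"
    by (simp add: sq_simps flip: power_mult)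
  then have "fps_to_fls (sq Wf ^ 3 + (fps_X ^ 2 - 1) * sq Wf ^ 2 - fps_X ^ 4 * sq Wf + fps_X ^ 4) = 0"
    by simp
  then show ?thesis unfolding wz_def by (simp add: fls_times_fps_to_fls fps_to_fls_power)
qed

lemma g_ident: "fps_to_fls (sq (Gf - 1)) * (wz * (1 - fls_X ^ 2) - fls_X ^ 2) = fls_X ^ 2 * wz"
proof -
  have "sq ((Gf - 1) * (Wf * (1 - fps_X) - fps_X)) = sq (fps_X * Wf)"
    using G_ident by simp
  then have "sq (Gf - 1) * (sq Wf * (1 - fps_X ^ 2) - fps_X ^ 2) = fps_X ^ 2 * sq Wf"
    by (simp add: sq_mult sq_diff sq_one sq_X)
  then have "fps_to_fls (sq (Gf - 1) * (sq Wf * (1 - fps_X ^ 2) - fps_X ^ 2)) = fps_to_fls (fps_X ^ 2 * sq Wf)"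
    by simp
  then show ?thesis unfolding wz_def by (simp add: fls_times_fps_to_fls fps_to_fls_power)
qed

lemma XU: "fls_X * fls_X_inv = (1 :: real fls)"
  by (simp add: fls_X_times_conv_shift fls_X_inv_conv_shift_1)

lemma Xne: "(fls_X :: real fls) \<noteq> 0"
  using XU by auto

lemma v0_nth: "v0 $$ n = (if n + 1 < 0 then 0 else sq Wf $ nat (n + 1))"
  unfolding v0_def wz_def by (simp add: fls_X_inv_times_conv_shift)

lemma v0_is_v1: "is_v1 v0"
proof -
  have "fls_X ^ 2 * (fls_X * v0 ^ 3 + (fls_X ^ 2 - 1) * v0 ^ 2 - fls_X ^ 3 * v0 + fls_X ^ 2)
      = wz ^ 3 + (fls_X ^ 2 - 1) * wz ^ 2 - fls_X ^ 4 * wz + fls_X ^ 4"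
    using XU unfolding v0_def by algebra
  then have "fls_X ^ 2 * (fls_X * v0 ^ 3 + (fls_X ^ 2 - 1) * v0 ^ 2 - fls_X ^ 3 * v0 + fls_X ^ 2) = 0"
    using wz_cubic by simp
  then have c: "fls_X * v0 ^ 3 + (fls_X ^ 2 - 1) * v0 ^ 2 - fls_X ^ 3 * v0 + fls_X ^ 2 = 0"
    using Xne by simp
  have "sq Wf $ 0 = 1" by (simp add: sq_nth Wf0)
  then show ?thesis unfolding is_v1_def using c by (simp add: v0_nth)
qed

lemma v1_unique: assumes "is_v1 v" shows "v = v0"
proof -
  have c: "fls_X * v ^ 3 + (fls_X ^ 2 - 1) * v ^ 2 - fls_X ^ 3 * v + fls_X ^ 2 = 0"
    and lo: "\<forall>n < -1. v $$ n = 0" and m1: "v $$ (-1) = 1"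
    using assms unfolding is_v1_def by auto
  define wv where "wv = fls_X * v"
  have wvn: "wv $$ n = v $$ (n - 1)" for n unfolding wv_def by (simp add: fls_X_times_conv_shift)
  define Wv where "Wv = fls_regpart wv"
  have wvW: "wv = fps_to_fls Wv"
  proof (rule fls_eqI)
    fix n show "wv $$ n = fps_to_fls Wv $$ n"
      using lo by (auto simp: Wv_def wvn)
  qed
  have Wv0: "Wv $ 0 = 1" using m1 by (simp add: Wv_def wvn)
  have vwv: "v = fls_X_inv * wv" unfolding wv_def using XU by (metis mult.assoc mult.commute mult_1)
  have cw: "wv ^ 3 + (fls_X ^ 2 - 1) * wv ^ 2 - fls_X ^ 4 * wv + fls_X ^ 4 = 0"
  proof -
    have "wv ^ 3 + (fls_X ^ 2 - 1) * wv ^ 2 - fls_X ^ 4 * wv + fls_X ^ 4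
        = fls_X ^ 2 * (fls_X * v ^ 3 + (fls_X ^ 2 - 1) * v ^ 2 - fls_X ^ 3 * v + fls_X ^ 2)"
      unfolding wv_def by algebra
    then show ?thesis using c by simp
  qed
  define Q where "Q = Wv ^ 2 + Wv * sq Wf + sq Wf ^ 2 + (fps_X ^ 2 - 1) * (Wv + sq Wf) - fps_X ^ 4"
  have "(wv - wz) * fps_to_fls Q = 0"
  proof -
    have "fps_to_fls Q = wv ^ 2 + wv * wz + wz ^ 2 + (fls_X ^ 2 - 1) * (wv + wz) - fls_X ^ 4"
      unfolding Q_def wvW wz_def by (simp add: fls_times_fps_to_fls fps_to_fls_power)
    moreover have "(wv - wz) * (wv ^ 2 + wv * wz + wz ^ 2 + (fls_X ^ 2 - 1) * (wv + wz) - fls_X ^ 4) = (wv ^ 3 + (fls_X ^ 2 - 1) * wv ^ 2 - fls_X ^ 4 * wv + fls_X ^ 4)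
        - (wz ^ 3 + (fls_X ^ 2 - 1) * wz ^ 2 - fls_X ^ 4 * wz + fls_X ^ 4)"
      by algebra
    ultimately have "(wv - wz) * fps_to_fls Q = (wv ^ 3 + (fls_X ^ 2 - 1) * wv ^ 2 - fls_X ^ 4 * wv + fls_X ^ 4)
        - (wz ^ 3 + (fls_X ^ 2 - 1) * wz ^ 2 - fls_X ^ 4 * wz + fls_X ^ 4)"
      by simp
    then show ?thesis using cw wz_cubic by simp
  qed
  moreover have "Q $ 0 = 1"
    unfolding Q_def using Wv0 by (simp add: sq_nth Wf0 power2_eq_square)
  then have "fps_to_fls Q \<noteq> 0" by auto
  ultimately have "wv = wz" by simp
  then show ?thesis using vwv unfolding v0_def by simp
qed

lemma v0_ne: "v0 \<noteq> 0"
proof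
  assume "v0 = 0"
  then have "v0 $$ (-1) = 0" by simp
  then show False by (simp add: v0_nth sq_nth Wf0)
qed

lemma main_g0: "g0 = fls_X ^ 2 * v0 / (v0 * (1 - fls_X ^ 2) - fls_X)"
proof -
  define den where "den = v0 * (1 - fls_X ^ 2) - fls_X"
  define g where "g = fps_to_fls (sq (Gf - 1))"
  have xd: "fls_X * den = wz * (1 - fls_X ^ 2) - fls_X ^ 2"
    unfolding den_def v0_def using XU by algebra
  have xn: "fls_X * (fls_X ^ 2 * v0) = fls_X ^ 2 * wz"
    unfolding v0_def using XU by algebra
  have "fls_X * (g * den) = fls_X * (fls_X ^ 2 * v0)"
  proof -
    have "fls_X * (g * den) = g * (fls_X * den)" by (simp add: algebra_simps)
    also have "\<dots> = fls_X ^ 2 * wz" unfolding xd g_def by (rule g_ident)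
    finally show ?thesis using xn by simp
  qed
  then have gd: "g * den = fls_X ^ 2 * v0" using Xne by simp
  have "den \<noteq> 0"
  proof
    assume "den = 0"
    then have "fls_X ^ 2 * v0 = 0" using gd by simp
    then show False using Xne v0_ne by simp
  qed
  then have "g = fls_X ^ 2 * v0 / den" using gd by (simp add: eq_divide_eq)
  then show ?thesis unfolding g_def den_def g0_eq .
qed

theorem mainTheorem4:
  shows "(\<exists>!v. is_v1 v)
    \<and> (\<forall>v. is_v1 v \<longrightarrow> g0 = fls_X ^ 2 * v / (v * (1 - fls_X ^ 2) - fls_X))
    \<and> map dcount [1..<9] = [1, 2, 5, 13, 35, 97, 274, 785]"
proof (intro conjI)
  show "\<exists>!v. is_v1 v" using v0_is_v1 v1_unique by blast
  show "\<forall>v. is_v1 v \<longrightarrow> g0 = fls_X ^ 2 * v / (v * (1 - fls_X ^ 2) - fls_X)"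
    using v1_unique main_g0 by blast
  have e: "map dcount [1..<9] = map cg [1..<9]" by (rule map_cong) (auto simp: dcount_cg)
  show "map dcount [1..<9] = [1, 2, 5, 13, 35, 97, 274, 785]" unfolding e by (rule cg_vals)
qed

end
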